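(* For every $n\ge1$ one has $\iota_1(\mathrm{Lie}(n))\subset\mathrm{Vert}(n)$ and $\iota_1(\mathrm{Lie}_1(n))\subset\mathrm{Vert}_1(n)$.
   Context: $\mathrm{Lie}$ is the operad of Lie algebras. $\mathrm{preLie}$ is the operad of (right) pre-Lie algebras, i.e. algebras with a product $\circ$ such that $(a\circ b)\circ c-a\circ(b\circ c)$ is graded symmetric in $b,c$; equivalently, $a\circ[b,c]=(a\circ b)\circ c-(-1)^{|b||c|}(a\circ c)\circ b$ with $[b,c]=b\circ c-(-1)^{|b||c|}c\circ b$. The inclusion of operads $\iota_1\colon\mathrm{Lie}\hookrightarrow\mathrm{preLie}$ sends $[x_1,x_2]$ to $x_1\circ x_2-x_2\circ x_1$. The operads $\mathrm{Lie}_1$ and $\mathrm{preLie}_1$ are the versions with bracket, resp. pre-Lie product, of degree one (obtained by desuspension of the underlying spaces), and $\iota_1\colon\mathrm{Lie}_1\hookrightarrow\mathrm{preLie}_1$ is the corresponding super-analogue. $\mathrm{Vert}(n)\subset\mathrm{preLie}(n)$ (resp. $\mathrm{Vert}_1(n)\subset\mathrm{preLie}_1(n)$) is the $n!$-dimensional subspace spanned by the left-normed products $(\cdots((x_{\sigma_1}\circ x_{\sigma_2})\circ x_{\sigma_3})\circ\cdots)\circ x_{\sigma_n}$ for $\sigma\in S_n$. *)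

theory Defs
  imports Main
begin

(* Binary planar trees with leaves labelled by generator indices:
   monomials of the free (non-associative) magma algebra. *)
datatype tree = Leaf nat | Node tree tree

(* Elements of the free non-associative algebra over 'k on generators x_i :
   coefficient functions on monomials (only finitely supported ones occur). *)
type_synonym 'k fna = "tree \<Rightarrow> 'k"

definition mono :: "tree \<Rightarrow> 'k::field fna" where
  "mono t = (\<lambda>s. if s = t then 1 else 0)"

definition fmult :: "'k::field fna \<Rightarrow> 'k fna \<Rightarrow> 'k fna" where
  "fmult p q = (\<lambda>s. case s of Leaf _ \<Rightarrow> 0 | Node a b \<Rightarrow> p a * q b)"

definition fadd :: "'k::field fna \<Rightarrow> 'k fna \<Rightarrow> 'k fna" where
  "fadd p q = (\<lambda>s. p s + q s)"

definition fsub :: "'k::field fna \<Rightarrow> 'k fna \<Rightarrow> 'k fna" where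
  "fsub p q = (\<lambda>s. p s - q s)"

definition fscale :: "'k::field \<Rightarrow> 'k fna \<Rightarrow> 'k fna" where
  "fscale c p = (\<lambda>s. c * p s)"

definition lin_span :: "'k::field fna set \<Rightarrow> 'k fna set" where
  "lin_span S = {(\<lambda>t. \<Sum>p\<in>F. c p * p t) | F c. finite F \<and> F \<subseteq> S}"

(* parity of a monomial; every generator has parity odd_gen
   (False: ordinary case; True: all generators odd = super case) *)
fun tpar :: "bool \<Rightarrow> tree \<Rightarrow> bool" where
  "tpar od (Leaf i) = od"
| "tpar od (Node a b) = (tpar od a \<noteq> tpar od b)"

definition ksign :: "bool \<Rightarrow> tree \<Rightarrow> tree \<Rightarrow> 'k::field" where
  "ksign od a b = (if tpar od a \<and> tpar od b then -1 else 1)"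

(* graded right pre-Lie relator:
   (a o b) o c - a o (b o c) - (-1)^{|b||c|} ((a o c) o b - a o (c o b)) *)
definition prelie_rel :: "bool \<Rightarrow> tree \<Rightarrow> tree \<Rightarrow> tree \<Rightarrow> 'k::field fna" where
  "prelie_rel od a b c =
     fsub (fsub (mono (Node (Node a b) c)) (mono (Node a (Node b c))))
          (fscale (ksign od b c)
             (fsub (mono (Node (Node a c) b)) (mono (Node a (Node c b)))))"

inductive_set prelie_ideal :: "bool \<Rightarrow> 'k::field fna set" for od where
  rel: "prelie_rel od a b c \<in> prelie_ideal od"
| zero: "(\<lambda>_. 0) \<in> prelie_ideal od"
| add: "p \<in> prelie_ideal od \<Longrightarrow> q \<in> prelie_ideal od \<Longrightarrow> fadd p q \<in> prelie_ideal od"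
| scale: "p \<in> prelie_ideal od \<Longrightarrow> fscale c p \<in> prelie_ideal od"
| lmul: "p \<in> prelie_ideal od \<Longrightarrow> fmult (mono r) p \<in> prelie_ideal od"
| rmul: "p \<in> prelie_ideal od \<Longrightarrow> fmult p (mono r) \<in> prelie_ideal od"

(* iota_1 on a Lie bracket monomial: [a,b] |-> a o b - (-1)^{|a||b|} b o a *)
fun comm_exp :: "bool \<Rightarrow> tree \<Rightarrow> 'k::field fna" where
  "comm_exp od (Leaf i) = mono (Leaf i)"
| "comm_exp od (Node a b) =
     fsub (fmult (comm_exp od a) (comm_exp od b))
          (fscale (ksign od a b) (fmult (comm_exp od b) (comm_exp od a)))"

fun leaves :: "tree \<Rightarrow> nat list" where
  "leaves (Leaf i) = [i]"
| "leaves (Node a b) = leaves a @ leaves b"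

definition multilin :: "nat \<Rightarrow> tree \<Rightarrow> bool" where
  "multilin n t = (sort (leaves t) = [1..<n+1])"

definition Lie_image :: "bool \<Rightarrow> nat \<Rightarrow> 'k::field fna set" where
  "Lie_image od n = lin_span {comm_exp od t | t. multilin n t}"

definition left_normed :: "nat list \<Rightarrow> tree" where
  "left_normed xs = foldl (\<lambda>t j. Node t (Leaf j)) (Leaf (hd xs)) (tl xs)"

definition Vert :: "nat \<Rightarrow> 'k::field fna set" where
  "Vert n = lin_span {mono (left_normed xs) | xs. sort xs = [1..<n+1]}"

(* p lies in the subspace V modulo the pre-Lie ideal, i.e. its class in preLie(n)
   lies in the image of V *)
definition in_mod :: "bool \<Rightarrow> 'k::field fna set \<Rightarrow> 'k fna \<Rightarrow> bool" where
  "in_mod od V p = (\<exists>v\<in>V. fsub p v \<in> prelie_ideal od)"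

end

theory Submission
  imports Defs "HOL-Library.Multiset"
begin

lemma fmult_zero_l: "fmult (\<lambda>_. 0) q = (\<lambda>_. 0)"
  by (rule ext) (simp add: fmult_def split: tree.split)
lemma fmult_zero_r: "fmult p (\<lambda>_. 0) = (\<lambda>_. 0)"
  by (rule ext) (simp add: fmult_def split: tree.split)
lemma fmult_add_l: "fmult (fadd p1 p2) q = fadd (fmult p1 q) (fmult p2 q)"
  by (rule ext) (simp add: fmult_def fadd_def algebra_simps split: tree.split)
lemma fmult_add_r: "fmult q (fadd p1 p2) = fadd (fmult q p1) (fmult q p2)"
  by (rule ext) (simp add: fmult_def fadd_def algebra_simps split: tree.split)
lemma fmult_scale_l: "fmult (fscale c p) q = fscale c (fmult p q)"
  by (rule ext) (simp add: fmult_def fscale_def algebra_simps split: tree.split)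
lemma fmult_scale_r: "fmult q (fscale c p) = fscale c (fmult q p)"
  by (rule ext) (simp add: fmult_def fscale_def algebra_simps split: tree.split)
lemma fmult_sub_r: "fmult q (fsub p1 p2) = fsub (fmult q p1) (fmult q p2)"
  by (rule ext) (simp add: fmult_def fsub_def algebra_simps split: tree.split)
lemma fmult_mono: "fmult (mono a) (mono b) = mono (Node a b)"
  by (rule ext) (simp add: fmult_def mono_def split: tree.split)
lemma fsub_as: "fsub p q = fadd p (fscale (-1) q)"
  by (rule ext) (simp add: fsub_def fadd_def fscale_def)

section \<open>Finite spans of homogeneous monomials\<close>

inductive_set FS :: "nat multiset \<Rightarrow> 'k::field fna set" for M where
  fz: "(\<lambda>_. 0) \<in> FS M"
| fm: "mset (leaves m) = M \<Longrightarrow> mono m \<in> FS M"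
| fa: "p \<in> FS M \<Longrightarrow> q \<in> FS M \<Longrightarrow> fadd p q \<in> FS M"
| fs: "p \<in> FS M \<Longrightarrow> fscale c p \<in> FS M"

lemma FS_sub: "p \<in> FS M \<Longrightarrow> q \<in> FS M \<Longrightarrow> fsub p q \<in> FS M"
  by (simp add: fsub_as FS.fa FS.fs)

lemma FS_mult: "p \<in> FS M1 \<Longrightarrow> q \<in> FS M2 \<Longrightarrow> fmult p q \<in> FS (M1 + M2)"
proof (induction p rule: FS.induct)
  case fz then show ?case by (simp add: fmult_zero_l FS.fz)
next
  case (fm m)
  from fm(2) show ?case
  proof (induction q rule: FS.induct)
    case fz then show ?case by (simp add: fmult_zero_r FS.fz)
  next
    case (fm m') then show ?case using \<open>mset (leaves m) = M1\<close>
      by (simp add: fmult_mono FS.fm)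
  next
    case (fa p q) then show ?case by (simp add: fmult_add_r FS.fa)
  next
    case (fs p c) then show ?case by (simp add: fmult_scale_r FS.fs)
  qed
next
  case (fa p q) then show ?case by (simp add: fmult_add_l FS.fa)
next
  case (fs p c) then show ?case by (simp add: fmult_scale_l FS.fs)
qed

lemma comm_exp_FS: "(comm_exp od t :: 'k::field fna) \<in> FS (mset (leaves t))"
proof (induction t)
  case (Leaf i) then show ?case by (simp add: FS.fm)
next
  case (Node a b)
  have 1: "fmult (comm_exp od a) (comm_exp od b) \<in> (FS :: _ \<Rightarrow> 'k fna set) (mset (leaves (Node a b)))"
    using FS_mult[OF Node(1) Node(2)] by simp
  have 2: "fmult (comm_exp od b) (comm_exp od a) \<in> (FS :: _ \<Rightarrow> 'k fna set) (mset (leaves (Node a b)))"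
    using FS_mult[OF Node(2) Node(1)] by (simp add: add.commute)
  show ?case using 1 2 by (simp add: FS_sub FS.fs)
qed

lemma ideal_mult_FS: "q \<in> FS M \<Longrightarrow> p \<in> prelie_ideal od \<Longrightarrow> fmult p q \<in> prelie_ideal od"
proof (induction q rule: FS.induct)
  case fz then show ?case by (simp add: fmult_zero_r prelie_ideal.zero)
next
  case (fm m) then show ?case by (simp add: prelie_ideal.rmul)
next
  case (fa p q) then show ?case by (simp add: fmult_add_r prelie_ideal.add)
next
  case (fs p c) then show ?case by (simp add: fmult_scale_r prelie_ideal.scale)
qed

lemma tpar_len: "tpar od t = (od \<and> odd (length (leaves t)))"
  by (induction t) auto

lemma ksign_eq:
  assumes "mset (leaves v) = mset (leaves a)" "mset (leaves w) = mset (leaves b)"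
  shows "ksign od v w = ksign od a b"
proof -
  have "length (leaves v) = length (leaves a)" "length (leaves w) = length (leaves b)"
    using assms by (metis size_mset)+
  then show ?thesis by (simp add: ksign_def tpar_len)
qed

definition Dfun :: "'k::field fna \<Rightarrow> 'k fna \<Rightarrow> 'k fna \<Rightarrow> 'k \<Rightarrow> 'k fna" where
  "Dfun u A B e = fsub (fsub (fmult (fmult u A) B) (fscale e (fmult (fmult u B) A)))
      (fsub (fmult u (fmult A B)) (fscale e (fmult u (fmult B A))))"

lemma D_zero_A: "Dfun u (\<lambda>_. 0) B e = (\<lambda>_. 0)"
  by (rule ext) (simp add: Dfun_def fmult_def fsub_def fscale_def split: tree.split)
lemma D_zero_B: "Dfun u A (\<lambda>_. 0) e = (\<lambda>_. 0)"
  by (rule ext) (simp add: Dfun_def fmult_def fsub_def fscale_def split: tree.split)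
lemma D_add_A: "Dfun u (fadd A1 A2) B e = fadd (Dfun u A1 B e) (Dfun u A2 B e)"
  by (rule ext) (simp add: Dfun_def fmult_def fsub_def fscale_def fadd_def algebra_simps split: tree.split)
lemma D_add_B: "Dfun u A (fadd B1 B2) e = fadd (Dfun u A B1 e) (Dfun u A B2 e)"
  by (rule ext) (simp add: Dfun_def fmult_def fsub_def fscale_def fadd_def algebra_simps split: tree.split)
lemma D_scale_A: "Dfun u (fscale c A) B e = fscale c (Dfun u A B e)"
  by (rule ext) (simp add: Dfun_def fmult_def fsub_def fscale_def algebra_simps split: tree.split)
lemma D_scale_B: "Dfun u A (fscale c B) e = fscale c (Dfun u A B e)"
  by (rule ext) (simp add: Dfun_def fmult_def fsub_def fscale_def algebra_simps split: tree.split)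

lemma D_mono: "Dfun (mono u) (mono v) (mono w) (ksign od v w) = prelie_rel od u v w"
  by (rule ext) (simp add: Dfun_def fmult_mono prelie_rel_def fsub_def fscale_def algebra_simps)

lemma D_ideal:
  assumes "A \<in> FS Ma" "B \<in> FS Mb"
    and "\<And>v w. mset (leaves v) = Ma \<Longrightarrow> mset (leaves w) = Mb \<Longrightarrow> ksign od v w = e"
  shows "Dfun (mono u) A B e \<in> prelie_ideal od"
  using assms(1)
proof (induction A rule: FS.induct)
  case fz then show ?case by (simp add: D_zero_A prelie_ideal.zero)
next
  case (fm v)
  from assms(2) show ?case
  proof (induction B rule: FS.induct)
    case fz then show ?case by (simp add: D_zero_B prelie_ideal.zero)
  next
    case (fm w)
    have "e = ksign od v w" using assms(3) \<open>mset (leaves v) = Ma\<close> fm by simp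
    then show ?case by (simp add: D_mono prelie_ideal.rel)
  next
    case (fa p q) then show ?case by (simp add: D_add_B prelie_ideal.add)
  next
    case (fs p c) then show ?case by (simp add: D_scale_B prelie_ideal.scale)
  qed
next
  case (fa p q) then show ?case by (simp add: D_add_A prelie_ideal.add)
next
  case (fs p c) then show ?case by (simp add: D_scale_A prelie_ideal.scale)
qed

section \<open>Left-normed span modulo the ideal\<close>

inductive_set LN :: "bool \<Rightarrow> nat multiset \<Rightarrow> 'k::field fna set" for od M where
  li: "p \<in> prelie_ideal od \<Longrightarrow> p \<in> LN od M"
| lm: "mset xs = M \<Longrightarrow> xs \<noteq> [] \<Longrightarrow> mono (left_normed xs) \<in> LN od M"
| la: "p \<in> LN od M \<Longrightarrow> q \<in> LN od M \<Longrightarrow> fadd p q \<in> LN od M"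
| ls: "p \<in> LN od M \<Longrightarrow> fscale c p \<in> LN od M"

lemma LN_sub: "p \<in> LN od M \<Longrightarrow> q \<in> LN od M \<Longrightarrow> fsub p q \<in> LN od M"
  by (simp add: fsub_as LN.la LN.ls)

lemma LN_shift: "Z \<in> LN od M \<Longrightarrow> fsub Z Y \<in> prelie_ideal od \<Longrightarrow> Y \<in> LN od M"
proof -
  assume a: "Z \<in> LN od M" "fsub Z Y \<in> prelie_ideal od"
  have "Y = fsub Z (fsub Z Y)" by (rule ext) (simp add: fsub_def)
  then show ?thesis using a by (metis LN_sub LN.li)
qed

lemma LN_extend:
  assumes q: "q \<in> FS M'"
    and mon: "\<And>xs. xs \<noteq> [] \<Longrightarrow> fmult (mono (left_normed xs)) q \<in> LN od (mset xs + M)"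
  shows "p \<in> LN od X \<Longrightarrow> fmult p q \<in> LN od (X + M)"
proof (induction p rule: LN.induct)
  case (li p) then show ?case using ideal_mult_FS[OF q] by (simp add: LN.li)
next
  case (lm xs) then show ?case using mon[OF lm(2)] lm(1) by simp
next
  case (la p q) then show ?case by (simp add: fmult_add_l LN.la)
next
  case (ls p c) then show ?case by (simp add: fmult_scale_l LN.ls)
qed

lemma left_normed_snoc: "xs \<noteq> [] \<Longrightarrow> left_normed (xs @ [i]) = Node (left_normed xs) (Leaf i)"
  by (cases xs) (simp_all add: left_normed_def)

lemma main_mono:
  "xs \<noteq> [] \<Longrightarrow> fmult (mono (left_normed xs)) (comm_exp od t) \<in> (LN od :: _ \<Rightarrow> 'k::field fna set) (mset xs + mset (leaves t))"
proof (induction t arbitrary: xs)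
  case (Leaf i)
  have "mono (left_normed (xs @ [i])) \<in> LN od (mset xs + mset (leaves (Leaf i)))"
    by (rule LN.lm) simp_all
  then show ?case using Leaf by (simp add: fmult_mono left_normed_snoc)
next
  case (Node a b)
  define u where "u = left_normed xs"
  define A where "A = (comm_exp od a :: 'k fna)"
  define B where "B = (comm_exp od b :: 'k fna)"
  define e where "e = (ksign od a b :: 'k)"
  define X where "X = mset xs"
  have extA: "\<And>p Y. p \<in> LN od Y \<Longrightarrow> fmult p A \<in> LN od (Y + mset (leaves a))"
    unfolding A_def by (rule LN_extend[OF comm_exp_FS Node(1)])
  have extB: "\<And>p Y. p \<in> LN od Y \<Longrightarrow> fmult p B \<in> LN od (Y + mset (leaves b))"
    unfolding B_def by (rule LN_extend[OF comm_exp_FS Node(2)])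
  have mu: "mono u \<in> LN od X" unfolding u_def X_def using Node(3) by (rule LN.lm[OF refl])
  have z1: "fmult (fmult (mono u) A) B \<in> LN od (X + mset (leaves (Node a b)))"
    using extB[OF extA[OF mu]] by (simp add: ac_simps)
  have z2: "fmult (fmult (mono u) B) A \<in> LN od (X + mset (leaves (Node a b)))"
    using extA[OF extB[OF mu]] by (simp add: ac_simps)
  define Z where "Z = fsub (fmult (fmult (mono u) A) B) (fscale e (fmult (fmult (mono u) B) A))"
  define Y where "Y = fsub (fmult (mono u) (fmult A B)) (fscale e (fmult (mono u) (fmult B A)))"
  have Z: "Z \<in> LN od (X + mset (leaves (Node a b)))"
    unfolding Z_def using z1 z2 by (simp add: LN_sub LN.ls)
  have D: "fsub Z Y \<in> prelie_ideal od"
  proof -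
    have "Dfun (mono u) A B e \<in> prelie_ideal od"
      unfolding A_def B_def e_def
      by (rule D_ideal[OF comm_exp_FS comm_exp_FS]) (rule ksign_eq; simp)
    then show ?thesis by (simp add: Dfun_def Z_def Y_def)
  qed
  have "Y \<in> LN od (X + mset (leaves (Node a b)))" by (rule LN_shift[OF Z D])
  then show ?case
    by (simp add: Y_def A_def B_def e_def u_def X_def fmult_sub_r fmult_scale_r)
qed

lemma comm_exp_LN: "(comm_exp od t :: 'k::field fna) \<in> LN od (mset (leaves t))"
proof (induction t)
  case (Leaf i)
  have "mono (left_normed [i]) \<in> LN od (mset (leaves (Leaf i)))" by (rule LN.lm) simp_all
  then show ?case by (simp add: left_normed_def)
next
  case (Node a b)
  have 1: "fmult (comm_exp od a) (comm_exp od b) \<in> (LN od :: _ \<Rightarrow> 'k fna set) (mset (leaves (Node a b)))"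
    using LN_extend[OF comm_exp_FS main_mono Node(1)] by simp
  have 2: "fmult (comm_exp od b) (comm_exp od a) \<in> (LN od :: _ \<Rightarrow> 'k fna set) (mset (leaves (Node a b)))"
    using LN_extend[OF comm_exp_FS main_mono Node(2)] by (simp add: add.commute)
  show ?case using 1 2 by (simp add: LN_sub LN.ls)
qed

lemma lin_span_iff:
  "x \<in> lin_span S \<longleftrightarrow> (\<exists>F c. x = (\<lambda>t. \<Sum>p\<in>F. c p * p t) \<and> finite F \<and> F \<subseteq> S)"
  unfolding lin_span_def by (rule iffI) (erule CollectE, assumption, rule CollectI, assumption)

lemma lin_span_sub:
  assumes "S \<subseteq> L" "(\<lambda>_. 0) \<in> L" "\<And>p q. p \<in> L \<Longrightarrow> q \<in> L \<Longrightarrow> fadd p q \<in> L"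
    "\<And>c p. p \<in> L \<Longrightarrow> fscale c p \<in> L"
  shows "lin_span S \<subseteq> L"
proof
  fix x assume "x \<in> lin_span S"
  then obtain F c where x: "x = (\<lambda>t. \<Sum>p\<in>F. c p * p t)" and F: "finite F" "F \<subseteq> S"
    unfolding lin_span_iff by blast
  have "(\<lambda>t. \<Sum>p\<in>F. c p * p t) \<in> L" using F
  proof (induction F rule: finite_induct)
    case empty then show ?case using assms(2) by simp
  next
    case (insert q F)
    have e: "(\<lambda>t. \<Sum>p\<in>insert q F. c p * p t) = fadd (fscale (c q) q) (\<lambda>t. \<Sum>p\<in>F. c p * p t)"
      using insert(1,2) by (simp add: fadd_def fscale_def)
    have q: "q \<in> L" using insert.prems assms(1) by blast
    have ih: "(\<lambda>t. \<Sum>p\<in>F. c p * p t) \<in> L" using insert.IH insert.prems by blast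
    show ?case unfolding e by (rule assms(3)[OF assms(4)[OF q] ih])
  qed
  then show "x \<in> L" using x by simp
qed

lemma lin_span_zero: "(\<lambda>_. 0) \<in> lin_span S"
  unfolding lin_span_iff by (rule exI[of _ "{}"]) simp

lemma lin_span_elem: "m \<in> S \<Longrightarrow> m \<in> lin_span S"
  unfolding lin_span_iff by (rule exI[of _ "{m}"], rule exI[of _ "\<lambda>_. 1"]) simp

lemma lin_span_scale: "x \<in> lin_span S \<Longrightarrow> fscale k x \<in> lin_span S"
proof -
  assume "x \<in> lin_span S"
  then obtain F c where F: "finite F" "F \<subseteq> S" and x: "x = (\<lambda>t. \<Sum>p\<in>F. c p * p t)"
    unfolding lin_span_iff by blast
  have e: "fscale k x = (\<lambda>t. \<Sum>p\<in>F. (k * c p) * p t)"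
    by (rule ext) (simp add: x fscale_def sum_distrib_left mult.assoc)
  show ?thesis unfolding lin_span_iff
    by (rule exI[of _ F], rule exI[of _ "\<lambda>p. k * c p"]) (simp add: e F)
qed

lemma lin_span_add: "x \<in> lin_span S \<Longrightarrow> y \<in> lin_span S \<Longrightarrow> fadd x y \<in> lin_span S"
proof -
  assume "x \<in> lin_span S" "y \<in> lin_span S"
  then obtain F1 c1 F2 c2 where F: "finite F1" "F1 \<subseteq> S" "finite F2" "F2 \<subseteq> S"
    and x: "x = (\<lambda>t. \<Sum>p\<in>F1. c1 p * p t)" and y: "y = (\<lambda>t. \<Sum>p\<in>F2. c2 p * p t)"
    unfolding lin_span_iff by blast
  define c where "c p = (if p \<in> F1 then c1 p else 0) + (if p \<in> F2 then c2 p else 0)" for p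
  have e: "fadd x y = (\<lambda>t. \<Sum>p\<in>F1 \<union> F2. c p * p t)"
  proof (rule ext)
    fix t
    have "(\<Sum>p\<in>F1 \<union> F2. c p * p t) =
        (\<Sum>p\<in>F1 \<union> F2. if p \<in> F1 then c1 p * p t else 0) + (\<Sum>p\<in>F1 \<union> F2. if p \<in> F2 then c2 p * p t else 0)"
      unfolding c_def sum.distrib[symmetric] by (rule sum.cong) (auto simp: distrib_right)
    also have "\<dots> = (\<Sum>p\<in>F1. c1 p * p t) + (\<Sum>p\<in>F2. c2 p * p t)"
    proof -
      have f: "finite (F1 \<union> F2)" using F by simp
      have "(F1 \<union> F2) \<inter> F1 = F1" "(F1 \<union> F2) \<inter> F2 = F2" by blast+
      then show ?thesis
        using sum.inter_restrict[OF f, of "\<lambda>p. c1 p * p t" F1]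
          sum.inter_restrict[OF f, of "\<lambda>p. c2 p * p t" F2] by simp
    qed
    finally show "fadd x y t = (\<Sum>p\<in>F1 \<union> F2. c p * p t)" by (simp add: x y fadd_def)
  qed
  show ?thesis unfolding lin_span_iff
    by (rule exI[of _ "F1 \<union> F2"], rule exI[of _ c]) (simp add: e F)
qed

lemma sort_mset_eq: "mset xs = mset ys \<Longrightarrow> sort xs = sort ys"
  by (metis sorted_list_of_multiset_mset)

lemma LN_in_mod:
  assumes "(p :: 'k::field fna) \<in> LN od (mset [1..<n+1])"
  shows "in_mod od (Vert n) p"
  using assms
proof (induction p rule: LN.induct)
  case (li p)
  have e: "fsub p (\<lambda>_. 0) = p" by (rule ext) (simp add: fsub_def)
  have z: "(\<lambda>_. 0) \<in> (Vert n :: 'k fna set)" unfolding Vert_def by (rule lin_span_zero)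
  show ?case unfolding in_mod_def
    by (rule bexI[OF _ z]) (simp only: e li)
next
  case (lm xs)
  have "sort xs = [1..<n+1]" using sort_mset_eq[OF lm(1)] sorted_sort_id[OF sorted_upt[of 1 "n+1"]]
    by (simp only:)
  then have m: "mono (left_normed xs) \<in> (Vert n :: 'k fna set)"
    unfolding Vert_def by (intro lin_span_elem) blast
  have e: "fsub (mono (left_normed xs)) (mono (left_normed xs)) = (\<lambda>_. (0::'k))"
    by (rule ext) (simp add: fsub_def)
  show ?case unfolding in_mod_def
    by (rule bexI[OF _ m]) (simp only: e prelie_ideal.zero)
next
  case (la p q)
  then obtain v w where v: "v \<in> Vert n" "fsub p v \<in> prelie_ideal od"
    and w: "w \<in> Vert n" "fsub q w \<in> prelie_ideal od" unfolding in_mod_def by blast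
  have e: "fsub (fadd p q) (fadd v w) = fadd (fsub p v) (fsub q w)"
    by (rule ext) (simp add: fsub_def fadd_def)
  have m: "fadd v w \<in> Vert n" using v w unfolding Vert_def by (simp add: lin_span_add)
  show ?case unfolding in_mod_def
    by (rule bexI[OF _ m]) (simp only: e prelie_ideal.add v w)
next
  case (ls p c)
  then obtain v where v: "v \<in> Vert n" "fsub p v \<in> prelie_ideal od" unfolding in_mod_def by blast
  have e: "fsub (fscale c p) (fscale c v) = fscale c (fsub p v)"
    by (rule ext) (simp add: fsub_def fscale_def algebra_simps)
  have m: "fscale c v \<in> Vert n" using v unfolding Vert_def by (simp add: lin_span_scale)
  show ?case unfolding in_mod_def
    by (rule bexI[OF _ m]) (simp only: e prelie_ideal.scale v)
qed

lemma general: "p \<in> (Lie_image od n :: 'k::field fna set) \<Longrightarrow> in_mod od (Vert n) p"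
proof -
  assume p: "p \<in> Lie_image od n"
  have "Lie_image od n \<subseteq> (LN od (mset [1..<n+1]) :: 'k fna set)"
    unfolding Lie_image_def
  proof (rule lin_span_sub)
    show "{comm_exp od t |t. multilin n t} \<subseteq> (LN od (mset [1..<n+1]) :: 'k fna set)"
    proof
      fix x :: "'k fna" assume "x \<in> {comm_exp od t |t. multilin n t}"
      then obtain t where t: "x = comm_exp od t" "multilin n t" by blast
      have "mset (leaves t) = mset [1..<n+1]"
        using t(2) unfolding multilin_def by (metis mset_sort)
      then show "x \<in> LN od (mset [1..<n+1])" using comm_exp_LN[of od t] t(1) by simp
    qed
  qed (auto intro: LN.intros prelie_ideal.zero)
  then show ?thesis using p LN_in_mod by blast
qed

theorem lemma5p5:
  fixes n :: nat
  assumes "n \<ge> 1"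
  shows "(\<forall>p \<in> (Lie_image False n :: 'k::field_char_0 fna set). in_mod False (Vert n) p)
       \<and> (\<forall>p \<in> (Lie_image True n :: 'k fna set). in_mod True (Vert n) p)"
  using general by blast

end
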